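(* In every polyhedral model $\mathcal{X}=\langle P,K,V\rangle$, the largest simplicial bisimulation on $P$ exists and coincides with logical equivalence $\equiv$.
   Context: A $d$-simplex $\sigma\subseteq\mathbb{R}^m$ is the convex hull of $d+1$ affinely independent points $v_0,\dots,v_d$ (its vertices); the simplexes spanned by subsets of the vertices (including the empty simplex) are its faces, and $\tau\preceq\sigma$ means $\tau$ is a face of $\sigma$. The relative interior of $\sigma$ is $\tilde\sigma=\{\sum_i\lambda_iv_i:\lambda_i\in(0,1],\sum_i\lambda_i=1\}$. A simplicial complex $K$ is a finite set of simplexes of $\mathbb{R}^m$ closed under taking faces and such that the intersection of any two of its simplexes is a face of both. Its polyhedron is $|K|=\bigcup K$, with the subspace topology of $\mathbb{R}^m$; $\mathcal{C}$ and $\mathcal{I}$ denote closure and interior in this space. The cells of $K$ are the sets $\tilde\sigma$ for nonempty $\sigma\in K$; they form a partition $\tilde K$ of $|K|$. A path in a space $P$ is a continuous $\pi:[0,1]\to P$; $\pi(S)=\{\pi(s):s\in S\}$. Fix a finite set $AP$ of atomic propositions. A polyhedral model is $\mathcal{X}=\langle P,K,V\rangle$ with $K$ a simplicial complex, $P=|K|$, and $V:AP\to\mathcal{P}(P)$ such that each $V(p)$ is a union of cells of $K$ ($K$ is then called coherent with the model). SLCS formulas: $\phi::=\top\mid p\mid\neg\phi\mid\phi\wedge\phi\mid\Box\phi\mid\gamma(\phi,\phi)$, $p\in AP$. Semantics at $x\in P$, with $[\![\phi]\!]=\{x\in P:\mathcal{X},x\models\phi\}$: $\top$ always holds; $x\models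 p$ iff $x\in V(p)$; Boolean connectives as usual; $x\models\Box\phi$ iff $x\in\mathcal{I}([\![\phi]\!])$; $x\models\gamma(\phi,\psi)$ iff there is a path $\pi$ in $P$ with $\pi(0)=x$, $\pi((0,1))\subseteq[\![\phi]\!]$ and $\pi(1)\in[\![\psi]\!]$. Logical equivalence $\equiv$ on $P$: $x\equiv y$ iff $x$ and $y$ satisfy exactly the same SLCS formulas. A path $\pi$ is simplicial (w.r.t. $K$) if there are $s_0=0<s_1<\dots<s_k=1$ and cells $\tilde\sigma_1,\dots,\tilde\sigma_k$ of $K$ with $\pi((s_{i-1},s_i))\subseteq\tilde\sigma_i$ for all $i$. For $R\subseteq P\times P$, paths satisfy $\pi_1\hat R\pi_2$ iff $\pi_1(t)\,R\,\pi_2(t)$ for all $t\in[0,1]$. A relation $\sim\subseteq P\times P$ is a simplicial bisimulation if whenever $x\sim y$: (1) for all $p\in AP$, $x\in V(p)\iff y\in V(p)$; (2) for every simplicial path $\pi_x$ with $\pi_x(0)=x$ there is a simplicial path $\pi_y$ with $\pi_y(0)=y$ and $\pi_x\hat\sim\pi_y$; (3) for every simplicial path $\pi_y$ with $\pi_y(0)=y$ there is a simplicial path $\pi_x$ with $\pi_x(0)=x$ and $\pi_x\hat\sim\pi_y$. *)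

theory Defs
  imports "HOL-Analysis.Analysis"
begin

text \<open>Ambient space R^m: an arbitrary Euclidean space 'a. Atomic propositions: a finite type 'p.\<close>

definition is_simplex :: "'a::euclidean_space set \<Rightarrow> bool" where
  "is_simplex \<sigma> \<longleftrightarrow> (\<exists>S. finite S \<and> \<not> affine_dependent S \<and> \<sigma> = convex hull S)"

definition is_face :: "'a::euclidean_space set \<Rightarrow> 'a set \<Rightarrow> bool" where
  "is_face \<tau> \<sigma> \<longleftrightarrow> (\<exists>S T. finite S \<and> \<not> affine_dependent S \<and> \<sigma> = convex hull S
       \<and> T \<subseteq> S \<and> \<tau> = convex hull T)"

definition simplex_relint :: "'a::euclidean_space set \<Rightarrow> 'a set" where
  "simplex_relint \<sigma> = {x. \<exists>S l. finite S \<and> \<not> affine_dependent S \<and> \<sigma> = convex hull S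
       \<and> (\<forall>v\<in>S. 0 < l v \<and> l v \<le> 1) \<and> sum l S = 1 \<and> x = (\<Sum>v\<in>S. l v *\<^sub>R v)}"

definition simplicial_complex :: "'a::euclidean_space set set \<Rightarrow> bool" where
  "simplicial_complex K \<longleftrightarrow> finite K \<and> (\<forall>\<sigma>\<in>K. is_simplex \<sigma>)
     \<and> (\<forall>\<sigma>\<in>K. \<forall>\<tau>. is_face \<tau> \<sigma> \<longrightarrow> \<tau> \<in> K)
     \<and> (\<forall>\<sigma>\<in>K. \<forall>\<tau>\<in>K. is_face (\<sigma> \<inter> \<tau>) \<sigma> \<and> is_face (\<sigma> \<inter> \<tau>) \<tau>)"

definition polyhedron :: "'a::euclidean_space set set \<Rightarrow> 'a set" where
  "polyhedron K = \<Union>K"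

definition cells :: "'a::euclidean_space set set \<Rightarrow> 'a set set" where
  "cells K = {simplex_relint \<sigma> | \<sigma>. \<sigma> \<in> K \<and> \<sigma> \<noteq> {}}"

definition polyhedral_model :: "'a::euclidean_space set set \<Rightarrow> ('p::finite \<Rightarrow> 'a set) \<Rightarrow> bool" where
  "polyhedral_model K V \<longleftrightarrow> simplicial_complex K
     \<and> (\<forall>p. \<exists>C. C \<subseteq> cells K \<and> V p = \<Union>C)"

datatype 'p fml = FTop | FAtom 'p | FNeg "'p fml" | FAnd "'p fml" "'p fml"
  | FBox "'p fml" | FGamma "'p fml" "'p fml"

definition path_in :: "'a::euclidean_space set \<Rightarrow> (real \<Rightarrow> 'a) \<Rightarrow> bool" where
  "path_in P \<pi> \<longleftrightarrow> path \<pi> \<and> path_image \<pi> \<subseteq> P"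

fun sem :: "'a::euclidean_space set set \<Rightarrow> ('p \<Rightarrow> 'a set) \<Rightarrow> 'p fml \<Rightarrow> 'a set" where
  "sem K V FTop = polyhedron K"
| "sem K V (FAtom p) = polyhedron K \<inter> V p"
| "sem K V (FNeg \<phi>) = polyhedron K - sem K V \<phi>"
| "sem K V (FAnd \<phi> \<psi>) = sem K V \<phi> \<inter> sem K V \<psi>"
| "sem K V (FBox \<phi>) = (top_of_set (polyhedron K)) interior_of (sem K V \<phi>)"
| "sem K V (FGamma \<phi> \<psi>) = {x \<in> polyhedron K. \<exists>\<pi>. path_in (polyhedron K) \<pi> \<and> \<pi> 0 = x
       \<and> \<pi> ` {0<..<1} \<subseteq> sem K V \<phi> \<and> \<pi> 1 \<in> sem K V \<psi>}"

definition logeq :: "'a::euclidean_space set set \<Rightarrow> ('p \<Rightarrow> 'a set) \<Rightarrow> ('a \<times> 'a) set" where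
  "logeq K V = {(x, y). x \<in> polyhedron K \<and> y \<in> polyhedron K
      \<and> (\<forall>\<phi>. x \<in> sem K V \<phi> \<longleftrightarrow> y \<in> sem K V \<phi>)}"

definition simplicial_path :: "'a::euclidean_space set set \<Rightarrow> (real \<Rightarrow> 'a) \<Rightarrow> bool" where
  "simplicial_path K \<pi> \<longleftrightarrow> path_in (polyhedron K) \<pi> \<and>
     (\<exists>k::nat. \<exists>s::nat \<Rightarrow> real. \<exists>c::nat \<Rightarrow> 'a set. k \<ge> 1 \<and> s 0 = 0 \<and> s k = 1
        \<and> (\<forall>i<k. s i < s (Suc i))
        \<and> (\<forall>i\<in>{1..k}. c i \<in> cells K \<and> \<pi> ` {s (i - 1)<..<s i} \<subseteq> c i))"

definition path_rel :: "('a \<times> 'a) set \<Rightarrow> (real \<Rightarrow> 'a) \<Rightarrow> (real \<Rightarrow> 'a) \<Rightarrow> bool" where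
  "path_rel R \<pi>1 \<pi>2 \<longleftrightarrow> (\<forall>t\<in>{0..1}. (\<pi>1 t, \<pi>2 t) \<in> R)"

definition simplicial_bisim :: "'a::euclidean_space set set \<Rightarrow> ('p \<Rightarrow> 'a set) \<Rightarrow> ('a \<times> 'a) set \<Rightarrow> bool" where
  "simplicial_bisim K V R \<longleftrightarrow> R \<subseteq> polyhedron K \<times> polyhedron K \<and>
     (\<forall>(x, y)\<in>R.
        (\<forall>p. x \<in> V p \<longleftrightarrow> y \<in> V p)
      \<and> (\<forall>\<pi>x. simplicial_path K \<pi>x \<and> \<pi>x 0 = x \<longrightarrow>
            (\<exists>\<pi>y. simplicial_path K \<pi>y \<and> \<pi>y 0 = y \<and> path_rel R \<pi>x \<pi>y))
      \<and> (\<forall>\<pi>y. simplicial_path K \<pi>y \<and> \<pi>y 0 = y \<longrightarrow>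
            (\<exists>\<pi>x. simplicial_path K \<pi>x \<and> \<pi>x 0 = x \<and> path_rel R \<pi>x \<pi>y)))"

end

theory Submission
  imports Defs
begin


lemma relint_sub: "simplex_relint \<sigma> \<subseteq> \<sigma>"
proof
  fix x assume "x \<in> simplex_relint \<sigma>"
  then obtain S l where S: "finite S" "\<sigma> = convex hull S" "\<forall>v\<in>S. 0 < l v \<and> l v \<le> 1"
    "sum l S = 1" "x = (\<Sum>v\<in>S. l v *\<^sub>R v)" unfolding simplex_relint_def by blast
  show "x \<in> \<sigma>" unfolding S(2) convex_hull_finite[OF S(1)] using S
    by (intro CollectI exI[of _ l]) auto
qed

lemma relint_ne:
  assumes "is_simplex \<sigma>" "\<sigma> \<noteq> {}" shows "\<exists>b. b \<in> simplex_relint \<sigma>"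
proof -
  obtain S where S: "finite S" "\<not> affine_dependent S" "\<sigma> = convex hull S"
    using assms(1) unfolding is_simplex_def by blast
  have ne: "S \<noteq> {}" using assms(2) S(3) by auto
  hence c: "card S \<ge> 1" using S(1) by (simp add: Suc_leI card_gt_0_iff)
  define l where "l = (\<lambda>v::'a. 1 / real (card S))"
  have "\<forall>v\<in>S. 0 < l v \<and> l v \<le> 1" using c by (auto simp: l_def)
  moreover have "sum l S = 1" using c by (simp add: l_def)
  ultimately show ?thesis unfolding simplex_relint_def using S by blast
qed

lemma relint_segment:
  assumes b: "b \<in> simplex_relint \<sigma>" and y: "y \<in> \<sigma>" and t: "0 < t" "t \<le> 1"
  shows "(1 - t) *\<^sub>R y + t *\<^sub>R b \<in> simplex_relint \<sigma>"
proof -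
  obtain S l where S: "finite S" "\<not> affine_dependent S" "\<sigma> = convex hull S" "\<forall>v\<in>S. 0 < l v \<and> l v \<le> 1"
    "sum l S = 1" "b = (\<Sum>v\<in>S. l v *\<^sub>R v)" using b unfolding simplex_relint_def by blast
  obtain u where u: "\<forall>x\<in>S. 0 \<le> u x" "sum u S = 1" "(\<Sum>x\<in>S. u x *\<^sub>R x) = y"
    using y unfolding S(3) convex_hull_finite[OF S(1)] by blast
  define w where "w = (\<lambda>v. (1 - t) * u v + t * l v)"
  have sw: "sum w S = 1" using u S t by (simp add: w_def sum.distrib sum_distrib_left[symmetric])
  have wpos: "\<forall>v\<in>S. 0 < w v" using u S t unfolding w_def
    by (metis add_nonneg_pos diff_ge_0_iff_ge mult_nonneg_nonneg mult_pos_pos)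
  have wle: "\<forall>v\<in>S. w v \<le> 1"
  proof
    fix v assume "v \<in> S"
    hence "w v \<le> sum w S" using wpos S(1) by (intro member_le_sum) (auto intro: less_imp_le)
    thus "w v \<le> 1" using sw by simp
  qed
  have "(\<Sum>v\<in>S. w v *\<^sub>R v) = (1 - t) *\<^sub>R y + t *\<^sub>R b"
  proof -
    have "(\<Sum>v\<in>S. w v *\<^sub>R v) = (\<Sum>v\<in>S. (1 - t) *\<^sub>R (u v *\<^sub>R v) + t *\<^sub>R (l v *\<^sub>R v))"
      by (rule sum.cong) (auto simp: w_def scaleR_add_left)
    also have "\<dots> = (1 - t) *\<^sub>R (\<Sum>v\<in>S. u v *\<^sub>R v) + t *\<^sub>R (\<Sum>v\<in>S. l v *\<^sub>R v)"
      by (simp only: sum.distrib scaleR_sum_right)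
    finally show ?thesis using u(3) S(6) by simp
  qed
  thus ?thesis unfolding simplex_relint_def
    by (intro CollectI exI[of _ S] exI[of _ w]) (use S sw wpos wle in auto)
qed

lemma cover:
  assumes K: "simplicial_complex K" and p: "p \<in> polyhedron K"
  shows "\<exists>\<sigma>\<in>K. p \<in> simplex_relint \<sigma>"
proof -
  obtain \<sigma> where \<sigma>: "\<sigma> \<in> K" "p \<in> \<sigma>" using p unfolding polyhedron_def by blast
  obtain S where S: "finite S" "\<not> affine_dependent S" "\<sigma> = convex hull S"
    using \<sigma>(1) K unfolding simplicial_complex_def is_simplex_def by blast
  obtain u where u: "\<forall>x\<in>S. 0 \<le> u x" "sum u S = 1" "(\<Sum>x\<in>S. u x *\<^sub>R x) = p"
    using \<sigma>(2) unfolding S(3) convex_hull_finite[OF S(1)] by blast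
  define T where "T = {v\<in>S. 0 < u v}"
  have TS: "T \<subseteq> S" by (auto simp: T_def)
  have fT: "finite T" using S(1) TS finite_subset by blast
  have iT: "\<not> affine_dependent T" using S(2) TS affine_dependent_subset by blast
  have face: "is_face (convex hull T) \<sigma>" unfolding is_face_def using S TS by blast
  hence inK: "convex hull T \<in> K" using K \<sigma>(1) unfolding simplicial_complex_def by blast
  have z: "\<forall>v\<in>S - T. u v = 0" using u(1) by (force simp: T_def)
  have sT: "sum u T = 1" using u(2) sum.mono_neutral_left[OF S(1) TS, of u] z by simp
  have pT: "(\<Sum>x\<in>T. u x *\<^sub>R x) = p" using u(3) sum.mono_neutral_left[OF S(1) TS, of "\<lambda>x. u x *\<^sub>R x"] z by simp
  have le: "\<forall>v\<in>T. 0 < u v \<and> u v \<le> 1"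
  proof
    fix v assume v: "v \<in> T"
    hence "u v \<le> sum u T" using fT by (intro member_le_sum) (auto simp: T_def)
    thus "0 < u v \<and> u v \<le> 1" using sT v by (auto simp: T_def)
  qed
  have "p \<in> simplex_relint (convex hull T)" unfolding simplex_relint_def
    by (intro CollectI exI[of _ T] exI[of _ u]) (use fT iT sT pT le in auto)
  thus ?thesis using inK by blast
qed

lemma vertices_unique:
  fixes S :: "'a::euclidean_space set"
  assumes "\<not> affine_dependent S" "\<not> affine_dependent S'" "convex hull S = convex hull S'"
  shows "S = S'"
proof (rule set_eqI)
  fix x show "x \<in> S \<longleftrightarrow> x \<in> S'"
    using extreme_point_of_convex_hull_affine_independent[OF assms(1), of x]
        extreme_point_of_convex_hull_affine_independent[OF assms(2), of x] assms(3) by simp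
qed

lemma face_lemma:
  assumes K: "simplicial_complex K" and \<rho>: "\<rho> \<in> K" and \<sigma>: "\<sigma> \<in> K"
    and p: "p \<in> simplex_relint \<rho>" "p \<in> \<sigma>"
  shows "\<rho> \<subseteq> \<sigma>"
proof -
  obtain S l where S: "finite S" "\<not> affine_dependent S" "\<rho> = convex hull S" "\<forall>v\<in>S. 0 < l v \<and> l v \<le> 1"
    "sum l S = 1" "p = (\<Sum>v\<in>S. l v *\<^sub>R v)" using p(1) unfolding simplex_relint_def by blast
  have "is_face (\<rho> \<inter> \<sigma>) \<rho>" using K \<rho> \<sigma> unfolding simplicial_complex_def by blast
  then obtain S' T where S': "finite S'" "\<not> affine_dependent S'" "\<rho> = convex hull S'" "T \<subseteq> S'"
    "\<rho> \<inter> \<sigma> = convex hull T" unfolding is_face_def by blast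
  have SS: "S = S'" using vertices_unique[OF S(2) S'(2)] S(3) S'(3) by simp
  have TS: "T \<subseteq> S" using S'(4) SS by simp
  have fT: "finite T" using TS S(1) finite_subset by blast
  have "p \<in> convex hull T" using S'(5) p relint_sub by blast
  then obtain m where m: "\<forall>x\<in>T. 0 \<le> m x" "sum m T = 1" "(\<Sum>x\<in>T. m x *\<^sub>R x) = p"
    unfolding convex_hull_finite[OF fT] by blast
  define m' where "m' = (\<lambda>v. if v \<in> T then m v else 0)"
  have m'1: "sum m' S = 1" using m(2) TS S(1) unfolding m'_def by (simp add: sum.If_cases Int_absorb1)
  have m'2: "(\<Sum>x\<in>S. m' x *\<^sub>R x) = p"
  proof -
    have "(\<Sum>x\<in>S. m' x *\<^sub>R x) = (\<Sum>x\<in>S. if x \<in> T then m x *\<^sub>R x else 0)"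
      by (rule sum.cong) (auto simp: m'_def)
    also have "\<dots> = (\<Sum>x\<in>T. m x *\<^sub>R x)" using TS S(1) by (simp add: sum.If_cases Int_absorb1)
    finally show ?thesis using m(3) by simp
  qed
  define U where "U = (\<lambda>v. l v - m' v)"
  have "sum U S = 0" using m'1 S(5) by (simp add: U_def sum_subtractf)
  moreover have "(\<Sum>v\<in>S. U v *\<^sub>R v) = 0" using m'2 S(6) by (simp add: U_def scaleR_diff_left sum_subtractf)
  ultimately have "\<forall>v\<in>S. U v = 0" using S(2) affine_dependent_explicit_finite[OF S(1)] by blast
  have "S \<subseteq> T"
  proof
    fix v assume v: "v \<in> S"
    show "v \<in> T"
    proof (rule ccontr)
      assume "v \<notin> T"
      hence "m' v = 0" by (simp add: m'_def)
      moreover have "U v = 0" using v \<open>\<forall>v\<in>S. U v = 0\<close> by blast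
      ultimately have "l v = 0" by (simp add: U_def)
      thus False using S(4) v by force
    qed
  qed
  hence "\<rho> \<subseteq> convex hull T" using S(3) hull_mono by blast
  thus ?thesis using S'(5) by blast
qed

lemma cell_unique:
  assumes K: "simplicial_complex K" and "\<rho> \<in> K" "\<sigma> \<in> K"
    "p \<in> simplex_relint \<rho>" "p \<in> simplex_relint \<sigma>"
  shows "\<rho> = \<sigma>"
proof -
  have "p \<in> \<sigma>" "p \<in> \<rho>" using assms(4,5) relint_sub by auto
  thus ?thesis using face_lemma[OF K assms(2,3,4)] face_lemma[OF K assms(3,2,5)] by (rule_tac equalityI) auto
qed

lemma star:
  assumes K: "simplicial_complex K"
  shows "\<exists>e>0. \<forall>q \<sigma>. \<sigma> \<in> K \<longrightarrow> q \<in> simplex_relint \<sigma> \<longrightarrow> dist q p < e \<longrightarrow> p \<in> \<sigma>"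
proof -
  define C where "C = \<Union>{\<sigma>\<in>K. p \<notin> \<sigma>}"
  have fin: "finite K" using K unfolding simplicial_complex_def by blast
  have "\<forall>\<sigma>\<in>K. closed \<sigma>"
  proof
    fix \<sigma> assume "\<sigma> \<in> K"
    then obtain S where "finite S" "\<sigma> = convex hull S"
      using K unfolding simplicial_complex_def is_simplex_def by blast
    thus "closed \<sigma>" by (simp add: compact_imp_closed finite_imp_compact_convex_hull)
  qed
  hence "closed C" unfolding C_def using fin by (intro closed_Union) auto
  moreover have "p \<notin> C" by (auto simp: C_def)
  ultimately obtain e where e: "e > 0" "ball p e \<subseteq> - C"
  proof -
    have "open (- C)" using \<open>closed C\<close> by (simp add: open_Compl)
    thus ?thesis using \<open>p \<notin> C\<close> open_contains_ball that by blast
  qed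
  show ?thesis
  proof (intro exI[of _ e] conjI allI impI e(1))
    fix q \<sigma> assume "\<sigma> \<in> K" "q \<in> simplex_relint \<sigma>" "dist q p < e"
    hence "q \<in> \<sigma>" "q \<notin> C" using e relint_sub by (auto simp: dist_commute)
    thus "p \<in> \<sigma>" using \<open>\<sigma> \<in> K\<close> unfolding C_def by blast
  qed
qed



definition join_at :: "real \<Rightarrow> (real \<Rightarrow> 'a) \<Rightarrow> (real \<Rightarrow> 'a) \<Rightarrow> real \<Rightarrow> 'a" where
  "join_at s g h t = (if t \<le> s then g (t / s) else h ((t - s) / (1 - s)))"

lemma join_at_0: "0 < s \<Longrightarrow> join_at s g h 0 = g 0" by (simp add: join_at_def)
lemma join_at_1: "s < 1 \<Longrightarrow> join_at s g h 1 = h 1" by (simp add: join_at_def)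

lemma path_join_at:
  fixes g h :: "real \<Rightarrow> 'a::real_normed_vector"
  assumes g: "path g" and h: "path h" and gh: "g 1 = h 0" and s: "0 < s" "s < 1"
  shows "path (join_at s g h)"
proof -
  have c1: "continuous_on {t \<in> {0..1}. t \<le> s} (\<lambda>t. g (t / s))"
  proof (rule continuous_on_compose2[OF g[unfolded path_def]])
    show "continuous_on {t \<in> {0..1}. t \<le> s} (\<lambda>t. t / s)" using s by (intro continuous_intros) auto
    show "(\<lambda>t. t / s) ` {t \<in> {0..1}. t \<le> s} \<subseteq> {0..1}" using s by (auto simp: field_simps)
  qed
  have c2: "continuous_on {t \<in> {0..1}. s \<le> t} (\<lambda>t. h ((t - s) / (1 - s)))"
  proof (rule continuous_on_compose2[OF h[unfolded path_def]])
    show "continuous_on {t \<in> {0..1}. s \<le> t} (\<lambda>t. (t - s) / (1 - s))" using s by (intro continuous_intros) auto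
    show "(\<lambda>t. (t - s) / (1 - s)) ` {t \<in> {0..1}. s \<le> t} \<subseteq> {0..1}" using s by (auto simp: field_simps)
  qed
  have "continuous_on {0..1} (\<lambda>t. if id t \<le> s then g (t / s) else h ((t - s) / (1 - s)))"
    by (rule continuous_on_cases_le) (use c1 c2 gh s in \<open>auto intro: continuous_intros\<close>)
  thus ?thesis unfolding path_def join_at_def by simp
qed

lemma join_at_image:
  assumes s: "0 < s" "s < 1" and t: "0 \<le> t" "t \<le> 1"
  shows "join_at s g h t \<in> g ` {0..1} \<union> h ` {0..1}"
proof (cases "t \<le> s")
  case True
  have "t / s \<in> {0..1}" using s t True by (simp add: divide_simps)
  thus ?thesis using True by (simp add: join_at_def)
next
  case False
  have "(t - s) / (1 - s) \<in> {0..1}" using s t False by (simp add: divide_simps)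
  thus ?thesis using False by (simp add: join_at_def)
qed

lemma join_at_image_open:
  assumes s: "0 < s" "s < 1" and t: "0 < t" "t < 1"
  shows "join_at s g h t \<in> g ` {0<..<1} \<union> {g 1} \<union> h ` {0<..<1}"
proof (cases "t < s")
  case True
  have "t / s \<in> {0<..<1}" using s t True by (simp add: divide_simps)
  thus ?thesis using True by (simp add: join_at_def)
next
  case False
  show ?thesis
  proof (cases "t = s")
    case True thus ?thesis using s by (simp add: join_at_def)
  next
    case False
    hence st: "s < t" using \<open>\<not> t < s\<close> by simp
    have "(t - s) / (1 - s) \<in> {0<..<1}" using s t st by (simp add: divide_simps)
    thus ?thesis using st by (simp add: join_at_def)
  qed
qed

lemma path_in_join_at:
  assumes "path_in P g" "path_in P h" "g 1 = h 0" "0 < s" "s < 1"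
  shows "path_in P (join_at s g h)"
proof -
  have "path (join_at s g h)" using assms path_join_at unfolding path_in_def by blast
  moreover have "path_image (join_at s g h) \<subseteq> P"
  proof
    fix x assume "x \<in> path_image (join_at s g h)"
    then obtain t where t: "t \<in> {0..1}" "x = join_at s g h t" unfolding path_image_def by blast
    hence "x \<in> g ` {0..1} \<union> h ` {0..1}" using join_at_image[of s t g h] assms by simp
    thus "x \<in> P" using assms unfolding path_in_def path_image_def by blast
  qed
  ultimately show ?thesis unfolding path_in_def by blast
qed

definition pieces :: "'a::euclidean_space set set \<Rightarrow> (real \<Rightarrow> 'a) \<Rightarrow> nat \<Rightarrow> (nat \<Rightarrow> real) \<Rightarrow> (nat \<Rightarrow> 'a set) \<Rightarrow> bool" where
  "pieces K \<pi> k s c \<longleftrightarrow> k \<ge> 1 \<and> s 0 = 0 \<and> s k = 1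
        \<and> (\<forall>i<k. s i < s (Suc i))
        \<and> (\<forall>i\<in>{1..k}. c i \<in> cells K \<and> \<pi> ` {s (i - 1)<..<s i} \<subseteq> c i)"

lemma simplicial_path_pieces: "simplicial_path K \<pi> \<longleftrightarrow> path_in (polyhedron K) \<pi> \<and> (\<exists>k s c. pieces K \<pi> k s c)"
  unfolding simplicial_path_def pieces_def by blast

lemma strict_mono_steps:
  assumes "\<forall>i<k. (s::nat \<Rightarrow> real) i < s (Suc i)" "i < j" "j \<le> k"
  shows "s i < s j"
  using assms(2,3)
proof (induction j)
  case 0 thus ?case by simp
next
  case (Suc j)
  show ?case
  proof (cases "i = j")
    case True thus ?thesis using assms(1) Suc by simp
  next
    case False
    hence "s i < s j" using Suc by simp
    also have "s j < s (Suc j)" using assms(1) Suc by simp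
    finally show ?thesis .
  qed
qed

lemma mono_steps:
  assumes "\<forall>i<k. (s::nat \<Rightarrow> real) i < s (Suc i)" "i \<le> j" "j \<le> k"
  shows "s i \<le> s j"
  using strict_mono_steps[OF assms(1)] assms(2,3) by (cases "i = j") (auto intro: less_imp_le)

lemma pieces_range:
  assumes "pieces K \<pi> k s c" "i \<le> k" shows "0 \<le> s i" "s i \<le> 1"
  using mono_steps[of k s 0 i] mono_steps[of k s i k] assms unfolding pieces_def by auto

lemma simplicial_line:
  assumes K: "simplicial_complex K" and \<sigma>: "\<sigma> \<in> K" and a: "a \<in> \<sigma>" and b: "b \<in> simplex_relint \<sigma>"
  shows "simplicial_path K (linepath a b)" "linepath a b ` {0<..1} \<subseteq> simplex_relint \<sigma>"
    "simplicial_path K (linepath b a)" "linepath b a ` {0..<1} \<subseteq> simplex_relint \<sigma>"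
proof -
  show im1: "linepath a b ` {0<..1} \<subseteq> simplex_relint \<sigma>"
    using relint_segment[OF b a] by (auto simp: linepath_def)
  show im2: "linepath b a ` {0..<1} \<subseteq> simplex_relint \<sigma>"
  proof
    fix x assume "x \<in> linepath b a ` {0..<1}"
    then obtain t where t: "0 \<le> t" "t < 1" "x = linepath b a t" by auto
    have "x = (1 - (1 - t)) *\<^sub>R a + (1 - t) *\<^sub>R b" using t by (simp add: linepath_def algebra_simps)
    thus "x \<in> simplex_relint \<sigma>" using relint_segment[OF b a, of "1 - t"] t by simp
  qed
  have conv: "convex \<sigma>" using K \<sigma> unfolding simplicial_complex_def is_simplex_def by (auto intro: convex_convex_hull)
  have bs: "b \<in> \<sigma>" using b relint_sub by blast
  have sub: "\<sigma> \<subseteq> polyhedron K" using \<sigma> unfolding polyhedron_def by blast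
  have ne: "\<sigma> \<noteq> {}" using a by blast
  have cell: "simplex_relint \<sigma> \<in> cells K" using \<sigma> ne unfolding cells_def by blast
  have pin1: "path_in (polyhedron K) (linepath a b)" unfolding path_in_def
    using closed_segment_subset[OF a bs conv] sub by auto
  have pin2: "path_in (polyhedron K) (linepath b a)" unfolding path_in_def
    using closed_segment_subset[OF bs a conv] sub by auto
  have p1: "pieces K (linepath a b) 1 real (\<lambda>_. simplex_relint \<sigma>)"
    unfolding pieces_def using cell im1 by auto
  have p2: "pieces K (linepath b a) 1 real (\<lambda>_. simplex_relint \<sigma>)"
    unfolding pieces_def using cell im2 by auto
  show "simplicial_path K (linepath a b)" using pin1 p1 simplicial_path_pieces by blast
  show "simplicial_path K (linepath b a)" using pin2 p2 simplicial_path_pieces by blast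
qed

lemma pieces_join:
  assumes g: "pieces K g k1 s1 c1" and h: "pieces K h k2 s2 c2" and s: "0 < s" "s < 1"
  shows "pieces K (join_at s g h) (k1 + k2) (\<lambda>i. if i \<le> k1 then s * s1 i else s + (1 - s) * s2 (i - k1))
            (\<lambda>i. if i \<le> k1 then c1 i else c2 (i - k1))"
proof -
  define ss where "ss = (\<lambda>i. if i \<le> k1 then s * s1 i else s + (1 - s) * s2 (i - k1))"
  have g1: "k1 \<ge> 1" "s1 0 = 0" "s1 k1 = 1" "\<forall>i<k1. s1 i < s1 (Suc i)"
    "\<forall>i\<in>{1..k1}. c1 i \<in> cells K \<and> g ` {s1 (i - 1)<..<s1 i} \<subseteq> c1 i" using g unfolding pieces_def by auto
  have h1: "k2 \<ge> 1" "s2 0 = 0" "s2 k2 = 1" "\<forall>i<k2. s2 i < s2 (Suc i)"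
    "\<forall>i\<in>{1..k2}. c2 i \<in> cells K \<and> h ` {s2 (i - 1)<..<s2 i} \<subseteq> c2 i" using h unfolding pieces_def by auto
  have ss_hi: "ss i = s + (1 - s) * s2 (i - k1)" if "k1 \<le> i" for i
    using that g1(3) h1(2) by (cases "i = k1") (auto simp: ss_def)
  have strict: "\<forall>i<k1 + k2. ss i < ss (Suc i)"
  proof (intro allI impI)
    fix i assume i: "i < k1 + k2"
    show "ss i < ss (Suc i)"
    proof (cases "Suc i \<le> k1")
      case True thus ?thesis using g1(4) s by (auto simp: ss_def)
    next
      case False
      hence "k1 \<le> i" by simp
      hence "ss i = s + (1 - s) * s2 (i - k1)" "ss (Suc i) = s + (1 - s) * s2 (Suc (i - k1))"
        using ss_hi[of i] ss_hi[of "Suc i"] by (auto simp: Suc_diff_le)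
      moreover have "s2 (i - k1) < s2 (Suc (i - k1))" using h1(4) i \<open>k1 \<le> i\<close> by auto
      ultimately show ?thesis using s by simp
    qed
  qed
  have cells: "\<forall>i\<in>{1..k1+k2}. (if i \<le> k1 then c1 i else c2 (i - k1)) \<in> cells K
        \<and> join_at s g h ` {ss (i - 1)<..<ss i} \<subseteq> (if i \<le> k1 then c1 i else c2 (i - k1))"
  proof
    fix i assume i: "i \<in> {1..k1+k2}"
    show "(if i \<le> k1 then c1 i else c2 (i - k1)) \<in> cells K
        \<and> join_at s g h ` {ss (i - 1)<..<ss i} \<subseteq> (if i \<le> k1 then c1 i else c2 (i - k1))"
    proof (cases "i \<le> k1")
      case True
      have ik: "i \<in> {1..k1}" using i True by simp
      have le1: "s1 i \<le> 1" using pieces_range(2)[OF g True] .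
      have "join_at s g h ` {ss (i - 1)<..<ss i} \<subseteq> c1 i"
      proof
        fix x assume "x \<in> join_at s g h ` {ss (i - 1)<..<ss i}"
        moreover have "ss (i - 1) = s * s1 (i - 1)" "ss i = s * s1 i" using True by (auto simp: ss_def)
        ultimately obtain t where t: "s * s1 (i - 1) < t" "t < s * s1 i" "x = join_at s g h t"
          by auto
        have ts: "t \<le> s" using t(2) le1 s by (smt (verit) mult_left_le)
        have "t / s \<in> {s1 (i - 1)<..<s1 i}" using t s by (auto simp: field_simps)
        hence "g (t / s) \<in> c1 i" using g1(5) ik by blast
        thus "x \<in> c1 i" using t(3) ts by (simp add: join_at_def)
      qed
      thus ?thesis using True g1(5) ik by simp
    next
      case False
      define j where "j = i - k1"
      have j: "j \<in> {1..k2}" "i - 1 - k1 = j - 1" using i False by (auto simp: j_def)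
      have ge0: "0 \<le> s2 (j - 1)" using pieces_range(1)[OF h, of "j - 1"] j(1) by auto
      have "join_at s g h ` {ss (i - 1)<..<ss i} \<subseteq> c2 j"
      proof
        fix x assume "x \<in> join_at s g h ` {ss (i - 1)<..<ss i}"
        moreover have "ss (i - 1) = s + (1 - s) * s2 (j - 1)" "ss i = s + (1 - s) * s2 j"
          using ss_hi[of "i - 1"] ss_hi[of i] False j by (auto simp: j_def)
        ultimately obtain t where t: "s + (1 - s) * s2 (j - 1) < t" "t < s + (1 - s) * s2 j" "x = join_at s g h t"
          by auto
        have ts: "s < t" using t(1) ge0 s by (smt (verit) mult_nonneg_nonneg)
        have "(t - s) / (1 - s) \<in> {s2 (j - 1)<..<s2 j}" using t s by (auto simp: field_simps)
        hence "h ((t - s) / (1 - s)) \<in> c2 j" using h1(5) j by blast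
        thus "x \<in> c2 j" using t(3) ts by (simp add: join_at_def)
      qed
      thus ?thesis using False h1(5) j by (simp add: j_def)
    qed
  qed
  show ?thesis unfolding pieces_def ss_def[symmetric]
    using strict cells g1 h1 by (auto simp: ss_def)
qed

lemma simplicial_join:
  assumes "simplicial_path K g" "simplicial_path K h" "g 1 = h 0" "0 < s" "s < 1"
  shows "simplicial_path K (join_at s g h)"
proof -
  obtain k1 s1 c1 where "pieces K g k1 s1 c1" using assms(1) simplicial_path_pieces by blast
  moreover obtain k2 s2 c2 where "pieces K h k2 s2 c2" using assms(2) simplicial_path_pieces by blast
  ultimately have "\<exists>k ss cc. pieces K (join_at s g h) k ss cc" using pieces_join assms(4,5) by blast
  moreover have "path_in (polyhedron K) (join_at s g h)"
    using path_in_join_at assms simplicial_path_pieces by blast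
  ultimately show ?thesis using simplicial_path_pieces by blast
qed



definition sat :: "'a::euclidean_space set set \<Rightarrow> 'a set \<Rightarrow> bool" where
  "sat K A \<longleftrightarrow> (\<forall>\<sigma>\<in>K. \<forall>p\<in>simplex_relint \<sigma>. \<forall>q\<in>simplex_relint \<sigma>. p \<in> A \<longrightarrow> q \<in> A)"

declare linepath_0'[simp] linepath_1'[simp]

lemma img_open_sub: "f ` {0<..<1::real} \<subseteq> f ` {0..<1}" "f ` {0<..<1::real} \<subseteq> f ` {0<..1}"
  by (rule image_mono, auto)+

lemma satD: "sat K A \<Longrightarrow> \<sigma> \<in> K \<Longrightarrow> p \<in> simplex_relint \<sigma> \<Longrightarrow> p \<in> A \<Longrightarrow> simplex_relint \<sigma> \<subseteq> A"
  unfolding sat_def by blast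

lemma path_near:
  assumes "path \<pi>" "t0 \<in> {0..1}" "e > 0"
  shows "\<exists>d>0. \<forall>t\<in>{0..1}. dist t t0 < d \<longrightarrow> dist (\<pi> t) (\<pi> t0) < e"
  using assms unfolding path_def continuous_on_iff by blast

lemma star_path:
  assumes K: "simplicial_complex K" and "path \<pi>" "t0 \<in> {0..1}"
  shows "\<exists>d>0. \<forall>t\<in>{0..1}. dist t t0 < d \<longrightarrow> (\<forall>\<sigma>\<in>K. \<pi> t \<in> simplex_relint \<sigma> \<longrightarrow> \<pi> t0 \<in> \<sigma>)"
proof -
  obtain e where e: "e > 0" "\<forall>q \<sigma>. \<sigma> \<in> K \<longrightarrow> q \<in> simplex_relint \<sigma> \<longrightarrow> dist q (\<pi> t0) < e \<longrightarrow> \<pi> t0 \<in> \<sigma>"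
    using star[OF K, of "\<pi> t0"] by blast
  obtain d where "d > 0" "\<forall>t\<in>{0..1}. dist t t0 < d \<longrightarrow> dist (\<pi> t) (\<pi> t0) < e"
    using path_near[OF assms(2,3) e(1)] by blast
  thus ?thesis using e by blast
qed

lemma extend:
  assumes g: "simplicial_path K g" "g ` {0<..<1} \<subseteq> A" and h: "simplicial_path K h" "h ` {0<..<1} \<subseteq> A"
    and gh: "g 1 = h 0" "h 0 \<in> A"
  shows "simplicial_path K (join_at (1/2) g h) \<and> join_at (1/2) g h 0 = g 0 \<and> join_at (1/2) g h 1 = h 1
     \<and> join_at (1/2) g h ` {0<..<1} \<subseteq> A"
proof -
  have "join_at (1/2) g h ` {0<..<1} \<subseteq> A"
  proof
    fix x assume "x \<in> join_at (1/2) g h ` {0<..<1}"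
    then obtain t where "t \<in> {0<..<1}" "x = join_at (1/2) g h t" by blast
    thus "x \<in> A" using join_at_image_open[of "1/2" t g h] g h gh by auto
  qed
  thus ?thesis using simplicial_join[OF g(1) h(1) gh(1)] join_at_0[of "1/2" g h] join_at_1[of "1/2" g h] by simp
qed

lemma simplicial_path_in: "simplicial_path K g \<Longrightarrow> path_in (polyhedron K) g"
  unfolding simplicial_path_def by blast

lemma conversion:
  assumes K: "simplicial_complex K" and A: "sat K A" and \<pi>: "path_in (polyhedron K) \<pi>" "\<pi> ` {0<..<1} \<subseteq> A"
  shows "\<exists>\<pi>'. simplicial_path K \<pi>' \<and> \<pi>' 0 = \<pi> 0 \<and> \<pi>' 1 = \<pi> 1 \<and> \<pi>' ` {0<..<1} \<subseteq> A"
proof -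
  let ?P = "polyhedron K"
  have pth: "path \<pi>" and inP: "\<And>t. t \<in> {0..1} \<Longrightarrow> \<pi> t \<in> ?P"
    using \<pi>(1) unfolding path_in_def path_image_def by auto
  have inA: "\<And>t. t \<in> {0<..<1} \<Longrightarrow> \<pi> t \<in> A" using \<pi>(2) by blast
  define R where "R = (\<lambda>t. \<exists>g. simplicial_path K g \<and> g 0 = \<pi> 0 \<and> g 1 = \<pi> t \<and> g ` {0<..<1} \<subseteq> A)"
  have loc: "\<exists>d>0. \<forall>t\<in>{0..1}. dist t t0 < d \<longrightarrow> (\<exists>\<sigma>\<in>K. \<pi> t \<in> simplex_relint \<sigma> \<and> \<pi> t0 \<in> \<sigma>)"
    if t0: "t0 \<in> {0..1}" for t0
  proof -
    obtain d where d: "d > 0" "\<forall>t\<in>{0..1}. dist t t0 < d \<longrightarrow> (\<forall>\<sigma>\<in>K. \<pi> t \<in> simplex_relint \<sigma> \<longrightarrow> \<pi> t0 \<in> \<sigma>)"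
      using star_path[OF K pth t0] by blast
    show ?thesis
    proof (intro exI[of _ d] conjI ballI impI d(1))
      fix t assume t: "t \<in> {0..1}" "dist t t0 < d"
      obtain \<sigma> where "\<sigma> \<in> K" "\<pi> t \<in> simplex_relint \<sigma>" using cover[OF K inP[OF t(1)]] by blast
      thus "\<exists>\<sigma>\<in>K. \<pi> t \<in> simplex_relint \<sigma> \<and> \<pi> t0 \<in> \<sigma>" using d t by blast
    qed
  qed
  obtain d0 where d0: "d0 > 0" "\<forall>t\<in>{0..1}. dist t 0 < d0 \<longrightarrow> (\<exists>\<sigma>\<in>K. \<pi> t \<in> simplex_relint \<sigma> \<and> \<pi> 0 \<in> \<sigma>)"
    using loc[of 0] by auto
  define a where "a = min (d0/2) (1/2)"
  have a: "a \<in> {0<..<1}" "dist a 0 < d0" using d0 by (auto simp: a_def dist_real_def)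
  obtain \<sigma>a where \<sigma>a: "\<sigma>a \<in> K" "\<pi> a \<in> simplex_relint \<sigma>a" "\<pi> 0 \<in> \<sigma>a" using d0 a by auto
  have Ra: "R a"
  proof -
    have "simplex_relint \<sigma>a \<subseteq> A" using satD[OF A \<sigma>a(1,2) inA[OF a(1)]] .
    moreover have "linepath (\<pi> 0) (\<pi> a) ` {0<..<1} \<subseteq> simplex_relint \<sigma>a"
      using simplicial_line(2)[OF K \<sigma>a(1,3,2)] by auto
    ultimately show ?thesis unfolding R_def using simplicial_line(1)[OF K \<sigma>a(1,3,2)]
      by (intro exI[of _ "linepath (\<pi> 0) (\<pi> a)"]) auto
  qed
  have Rall: "R b" if b: "b \<in> {0<..<1}" for b
  proof (rule connected_induction_simple[of "{0<..<1}" a b R])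
    show "connected {0<..<1::real}" by simp
    show "a \<in> {0<..<1}" "b \<in> {0<..<1}" "R a" using a b Ra by auto
  next
    fix c :: real assume c: "c \<in> {0<..<1}"
    obtain d where d: "d > 0" "\<forall>t\<in>{0..1}. dist t c < d \<longrightarrow> (\<exists>\<sigma>\<in>K. \<pi> t \<in> simplex_relint \<sigma> \<and> \<pi> c \<in> \<sigma>)"
      using loc[of c] c by auto
    show "\<exists>T. openin (top_of_set {0<..<1}) T \<and> c \<in> T \<and> (\<forall>x\<in>T. \<forall>y\<in>T. R x \<longrightarrow> R y)"
    proof (intro exI[of _ "{0<..<1} \<inter> ball c d"] conjI ballI impI)
      show "openin (top_of_set {0<..<1}) ({0<..<1} \<inter> ball c d)" by (intro openin_open_Int) auto
      show "c \<in> {0<..<1} \<inter> ball c d" using c d by auto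
    next
      fix x y assume x: "x \<in> {0<..<1} \<inter> ball c d" and y: "y \<in> {0<..<1} \<inter> ball c d" and Rx: "R x"
      obtain g where g: "simplicial_path K g" "g 0 = \<pi> 0" "g 1 = \<pi> x" "g ` {0<..<1} \<subseteq> A"
        using Rx unfolding R_def by blast
      obtain \<sigma>x where \<sigma>x: "\<sigma>x \<in> K" "\<pi> x \<in> simplex_relint \<sigma>x" "\<pi> c \<in> \<sigma>x"
        using d(2) x by (auto simp: dist_commute)
      obtain \<sigma>y where \<sigma>y: "\<sigma>y \<in> K" "\<pi> y \<in> simplex_relint \<sigma>y" "\<pi> c \<in> \<sigma>y"
        using d(2) y by (auto simp: dist_commute)
      have Ax: "simplex_relint \<sigma>x \<subseteq> A" using satD[OF A \<sigma>x(1,2)] inA x by blast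
      have Ay: "simplex_relint \<sigma>y \<subseteq> A" using satD[OF A \<sigma>y(1,2)] inA y by blast
      let ?l1 = "linepath (\<pi> x) (\<pi> c)" and ?l2 = "linepath (\<pi> c) (\<pi> y)"
      have l1: "simplicial_path K ?l1" "?l1 ` {0<..<1} \<subseteq> A"
        using simplicial_line(3,4)[OF K \<sigma>x(1,3,2)] Ax img_open_sub(1)[of ?l1] by auto
      have l2: "simplicial_path K ?l2" "?l2 ` {0<..<1} \<subseteq> A"
        using simplicial_line(1,2)[OF K \<sigma>y(1,3,2)] Ay img_open_sub(2)[of ?l2] by auto
      have e1: "simplicial_path K (join_at (1/2) ?l1 ?l2) \<and> join_at (1/2) ?l1 ?l2 0 = \<pi> x
          \<and> join_at (1/2) ?l1 ?l2 1 = \<pi> y \<and> join_at (1/2) ?l1 ?l2 ` {0<..<1} \<subseteq> A"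
        using extend[OF l1 l2] inA c by simp
      have "simplicial_path K (join_at (1/2) g (join_at (1/2) ?l1 ?l2)) \<and> join_at (1/2) g (join_at (1/2) ?l1 ?l2) 0 = \<pi> 0
          \<and> join_at (1/2) g (join_at (1/2) ?l1 ?l2) 1 = \<pi> y \<and> join_at (1/2) g (join_at (1/2) ?l1 ?l2) ` {0<..<1} \<subseteq> A"
        using extend[of K g A "join_at (1/2) ?l1 ?l2"] g e1 inA x by auto
      thus "R y" unfolding R_def by blast
    qed
  qed
  obtain d1 where d1: "d1 > 0" "\<forall>t\<in>{0..1}. dist t 1 < d1 \<longrightarrow> (\<exists>\<sigma>\<in>K. \<pi> t \<in> simplex_relint \<sigma> \<and> \<pi> 1 \<in> \<sigma>)"
    using loc[of 1] by auto
  define b where "b = max (1 - d1/2) (1/2)"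
  have b: "b \<in> {0<..<1}" "dist b 1 < d1" using d1 by (auto simp: b_def dist_real_def)
  obtain \<sigma>b where \<sigma>b: "\<sigma>b \<in> K" "\<pi> b \<in> simplex_relint \<sigma>b" "\<pi> 1 \<in> \<sigma>b" using d1 b by auto
  obtain g where g: "simplicial_path K g" "g 0 = \<pi> 0" "g 1 = \<pi> b" "g ` {0<..<1} \<subseteq> A"
    using Rall[OF b(1)] unfolding R_def by blast
  have Ab: "simplex_relint \<sigma>b \<subseteq> A" using satD[OF A \<sigma>b(1,2)] inA b by blast
  have l: "simplicial_path K (linepath (\<pi> b) (\<pi> 1))" "linepath (\<pi> b) (\<pi> 1) ` {0<..<1} \<subseteq> A"
    using simplicial_line(3,4)[OF K \<sigma>b(1,3,2)] Ab img_open_sub(1)[of "linepath (\<pi> b) (\<pi> 1)"] by auto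
  show ?thesis using extend[OF g(1,4) l] g inA b by (intro exI[of _ "join_at (1/2) g (linepath (\<pi> b) (\<pi> 1))"]) auto
qed



lemma relint_in_P: "\<sigma> \<in> K \<Longrightarrow> simplex_relint \<sigma> \<subseteq> polyhedron K"
  using relint_sub unfolding polyhedron_def by blast

lemma simplex_in_P: "\<sigma> \<in> K \<Longrightarrow> \<sigma> \<subseteq> polyhedron K"
  unfolding polyhedron_def by blast

lemma box_char:
  assumes K: "simplicial_complex K" and A: "sat K A" "A \<subseteq> polyhedron K" and p: "p \<in> polyhedron K"
  shows "p \<in> top_of_set (polyhedron K) interior_of A \<longleftrightarrow>
           (\<forall>\<sigma>\<in>K. p \<in> \<sigma> \<longrightarrow> simplex_relint \<sigma> \<subseteq> A)"
proof
  assume "p \<in> top_of_set (polyhedron K) interior_of A"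
  then obtain T where T: "openin (top_of_set (polyhedron K)) T" "p \<in> T" "T \<subseteq> A"
    unfolding interior_of_def by blast
  obtain e where e: "e > 0" "\<forall>x'\<in>polyhedron K. dist x' p < e \<longrightarrow> x' \<in> T"
    using T(1,2) unfolding openin_euclidean_subtopology_iff by blast
  show "\<forall>\<sigma>\<in>K. p \<in> \<sigma> \<longrightarrow> simplex_relint \<sigma> \<subseteq> A"
  proof (intro ballI impI)
    fix \<sigma> assume \<sigma>: "\<sigma> \<in> K" "p \<in> \<sigma>"
    have "is_simplex \<sigma>" using K \<sigma>(1) unfolding simplicial_complex_def by blast
    then obtain b where b: "b \<in> simplex_relint \<sigma>" using relint_ne \<sigma>(2) by blast
    define n where "n = norm (b - p)"
    define t where "t = min 1 (e / (2 * (n + 1)))"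
    have n0: "n \<ge> 0" by (simp add: n_def)
    have t: "0 < t" "t \<le> 1" using e n0 by (auto simp: t_def)
    define q where "q = (1 - t) *\<^sub>R p + t *\<^sub>R b"
    have q: "q \<in> simplex_relint \<sigma>" using relint_segment[OF b \<sigma>(2) t] by (simp add: q_def)
    have "dist q p = t * n"
    proof -
      have "q - p = t *\<^sub>R (b - p)" by (simp add: q_def algebra_simps)
      thus ?thesis using t by (simp add: dist_norm n_def)
    qed
    also have "\<dots> \<le> e / (2 * (n + 1)) * n" using n0 by (intro mult_right_mono) (auto simp: t_def)
    also have "\<dots> < e"
    proof -
      have "n / (2 * (n + 1)) < 1" using n0 by (simp add: field_simps)
      hence "e * (n / (2 * (n + 1))) < e * 1" using e(1) by (intro mult_strict_left_mono) auto
      thus ?thesis by simp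
    qed
    finally have "q \<in> T" using e(2) q relint_in_P[OF \<sigma>(1)] by blast
    hence "q \<in> A" using T(3) by blast
    thus "simplex_relint \<sigma> \<subseteq> A" using satD[OF A(1) \<sigma>(1) q] by blast
  qed
next
  assume H: "\<forall>\<sigma>\<in>K. p \<in> \<sigma> \<longrightarrow> simplex_relint \<sigma> \<subseteq> A"
  obtain e where e: "e > 0" "\<forall>q \<sigma>. \<sigma> \<in> K \<longrightarrow> q \<in> simplex_relint \<sigma> \<longrightarrow> dist q p < e \<longrightarrow> p \<in> \<sigma>"
    using star[OF K, of p] by blast
  have "openin (top_of_set (polyhedron K)) (polyhedron K \<inter> ball p e)" by (intro openin_open_Int) auto
  moreover have "p \<in> polyhedron K \<inter> ball p e" using p e by auto
  moreover have "polyhedron K \<inter> ball p e \<subseteq> A"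
  proof
    fix q assume q: "q \<in> polyhedron K \<inter> ball p e"
    then obtain \<sigma> where \<sigma>: "\<sigma> \<in> K" "q \<in> simplex_relint \<sigma>" using cover[OF K] by blast
    have "p \<in> \<sigma>" using e(2) \<sigma> q by (auto simp: dist_commute)
    thus "q \<in> A" using H \<sigma> by blast
  qed
  ultimately show "p \<in> top_of_set (polyhedron K) interior_of A" unfolding interior_of_def by blast
qed

lemma sat_box:
  assumes K: "simplicial_complex K" and A: "sat K A" "A \<subseteq> polyhedron K"
  shows "sat K (top_of_set (polyhedron K) interior_of A)"
  unfolding sat_def
proof (intro ballI impI)
  fix \<rho> p q assume \<rho>: "\<rho> \<in> K" and p: "p \<in> simplex_relint \<rho>" and q: "q \<in> simplex_relint \<rho>"
    and pi: "p \<in> top_of_set (polyhedron K) interior_of A"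
  have pP: "p \<in> polyhedron K" and qP: "q \<in> polyhedron K" using p q relint_in_P[OF \<rho>] by auto
  have H: "\<forall>\<sigma>\<in>K. p \<in> \<sigma> \<longrightarrow> simplex_relint \<sigma> \<subseteq> A" using box_char[OF K A pP] pi by blast
  have "\<forall>\<sigma>\<in>K. q \<in> \<sigma> \<longrightarrow> simplex_relint \<sigma> \<subseteq> A"
  proof (intro ballI impI)
    fix \<sigma> assume "\<sigma> \<in> K" "q \<in> \<sigma>"
    hence "\<rho> \<subseteq> \<sigma>" using face_lemma[OF K \<rho> _ q] by blast
    hence "p \<in> \<sigma>" using p relint_sub by blast
    thus "simplex_relint \<sigma> \<subseteq> A" using H \<open>\<sigma> \<in> K\<close> by blast
  qed
  thus "q \<in> top_of_set (polyhedron K) interior_of A" using box_char[OF K A qP] by blast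
qed

definition gam :: "'a::euclidean_space set set \<Rightarrow> 'a set \<Rightarrow> 'a set \<Rightarrow> 'a set" where
  "gam K A B = {x \<in> polyhedron K. \<exists>\<pi>. path_in (polyhedron K) \<pi> \<and> \<pi> 0 = x
       \<and> \<pi> ` {0<..<1} \<subseteq> A \<and> \<pi> 1 \<in> B}"

lemma sat_gam:
  assumes K: "simplicial_complex K" and A: "sat K A"
  shows "sat K (gam K A B)"
  unfolding sat_def
proof (intro ballI impI)
  fix \<rho> p q assume \<rho>: "\<rho> \<in> K" and p: "p \<in> simplex_relint \<rho>" and q: "q \<in> simplex_relint \<rho>"
    and pg: "p \<in> gam K A B"
  have qP: "q \<in> polyhedron K" using q relint_in_P[OF \<rho>] by auto
  obtain \<pi> where \<pi>: "path_in (polyhedron K) \<pi>" "\<pi> 0 = p" "\<pi> ` {0<..<1} \<subseteq> A" "\<pi> 1 \<in> B"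
    using pg unfolding gam_def by blast
  have pth: "path \<pi>" using \<pi>(1) unfolding path_in_def by blast
  obtain d where d: "d > 0" "\<forall>t\<in>{0..1}. dist t 0 < d \<longrightarrow> (\<forall>\<sigma>\<in>K. \<pi> t \<in> simplex_relint \<sigma> \<longrightarrow> \<pi> 0 \<in> \<sigma>)"
    using star_path[OF K pth, of 0] by auto
  define t0 where "t0 = min (d/2) (1/2)"
  have t0: "t0 \<in> {0<..<1}" "dist t0 0 < d" using d by (auto simp: t0_def dist_real_def)
  have "\<pi> t0 \<in> polyhedron K" using \<pi>(1) t0 unfolding path_in_def path_image_def by auto
  then obtain \<sigma> where \<sigma>: "\<sigma> \<in> K" "\<pi> t0 \<in> simplex_relint \<sigma>" using cover[OF K] by blast
  have "p \<in> \<sigma>" using d(2) t0 \<sigma> \<pi>(2) by auto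
  hence "\<rho> \<subseteq> \<sigma>" using face_lemma[OF K \<rho> \<sigma>(1) p] by blast
  hence q\<sigma>: "q \<in> \<sigma>" using q relint_sub by blast
  have As: "simplex_relint \<sigma> \<subseteq> A" using satD[OF A \<sigma>] \<pi>(3) t0 by blast
  let ?l = "linepath q (\<pi> t0)" and ?s = "subpath t0 1 \<pi>"
  have l: "path_in (polyhedron K) ?l" "?l ` {0<..<1} \<subseteq> A"
    using simplicial_line(1,2)[OF K \<sigma>(1) q\<sigma> \<sigma>(2)] simplicial_path_in As img_open_sub(2)[of ?l] by auto
  have s: "path_in (polyhedron K) ?s" using \<pi>(1) path_image_subpath_subset[of t0 1 \<pi>] t0
    unfolding path_in_def by auto
  have sim: "?s ` {0<..<1} \<subseteq> A"
  proof
    fix x assume "x \<in> ?s ` {0<..<1}"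
    then obtain u where u: "u \<in> {0<..<1}" "x = \<pi> ((1 - t0) * u + t0)" by (auto simp: subpath_def)
    have "0 < (1 - t0) * u" "(1 - t0) * u < 1 - t0" using u t0 by auto
    hence "(1 - t0) * u + t0 \<in> {0<..<1}" using t0 by auto
    thus "x \<in> A" using u \<pi>(3) by blast
  qed
  have e: "?l 1 = ?s 0" by (simp add: subpath_def)
  have "join_at (1/2) ?l ?s ` {0<..<1} \<subseteq> A"
  proof
    fix x assume "x \<in> join_at (1/2) ?l ?s ` {0<..<1}"
    then obtain t where "t \<in> {0<..<1}" "x = join_at (1/2) ?l ?s t" by blast
    thus "x \<in> A" using join_at_image_open[of "1/2" t ?l ?s] l sim \<pi>(3) t0 by auto
  qed
  moreover have "path_in (polyhedron K) (join_at (1/2) ?l ?s)" using path_in_join_at[OF l(1) s e] by simp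
  moreover have "join_at (1/2) ?l ?s 0 = q" "join_at (1/2) ?l ?s 1 = \<pi> 1"
    by (simp_all add: join_at_def subpath_def)
  ultimately show "q \<in> gam K A B" unfolding gam_def using qP \<pi>(4)
    by (intro CollectI conjI exI[of _ "join_at (1/2) ?l ?s"]) auto
qed

lemma sem_gamma: "sem K V (FGamma \<phi> \<psi>) = gam K (sem K V \<phi>) (sem K V \<psi>)"
  by (simp add: gam_def)

lemma sem_sub: "sem K V \<phi> \<subseteq> polyhedron K"
  by (induction \<phi>) (auto dest: interior_of_subset[THEN subsetD])

lemma sat_sem:
  assumes M: "polyhedral_model K V"
  shows "sat K (sem K V \<phi>)"
proof -
  have K: "simplicial_complex K" using M unfolding polyhedral_model_def by blast
  show ?thesis
  proof (induction \<phi>)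
    case FTop show ?case unfolding sat_def using relint_in_P by (simp only: sem.simps) blast
  next
    case (FAtom a)
    obtain C where C: "C \<subseteq> cells K" "V a = \<Union>C" using M unfolding polyhedral_model_def by blast
    show ?case unfolding sat_def
    proof (intro ballI impI)
      fix \<sigma> p q assume \<sigma>: "\<sigma> \<in> K" and p: "p \<in> simplex_relint \<sigma>" and q: "q \<in> simplex_relint \<sigma>"
        and pa: "p \<in> sem K V (FAtom a)"
      then obtain c where c: "c \<in> C" "p \<in> c" using C by auto
      then obtain \<tau> where \<tau>: "\<tau> \<in> K" "c = simplex_relint \<tau>" using C unfolding cells_def by blast
      have "\<tau> = \<sigma>" using cell_unique[OF K \<tau>(1) \<sigma>] c \<tau> p by blast
      hence "q \<in> V a" using q c \<tau> C by blast
      thus "q \<in> sem K V (FAtom a)" using q relint_in_P[OF \<sigma>] by auto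
    qed
  next
    case (FNeg \<phi>)
    show ?case unfolding sat_def
    proof (intro ballI impI)
      fix \<sigma> p q assume \<sigma>: "\<sigma> \<in> K" and p: "p \<in> simplex_relint \<sigma>" and q: "q \<in> simplex_relint \<sigma>"
        and pa: "p \<in> sem K V (FNeg \<phi>)"
      have "q \<notin> sem K V \<phi>" using FNeg pa p q \<sigma> unfolding sat_def by auto
      thus "q \<in> sem K V (FNeg \<phi>)" using q relint_in_P[OF \<sigma>] by auto
    qed
  next
    case (FAnd \<phi> \<psi>) thus ?case unfolding sat_def by auto
  next
    case (FBox \<phi>) thus ?case using sat_box[OF K FBox sem_sub] by simp
  next
    case (FGamma \<phi> \<psi>) thus ?case using sat_gam[OF K FGamma(1)] sem_gamma by metis
  qed
qed



lemma box_helper: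
  assumes K: "simplicial_complex K" and A: "sat K A" "A \<subseteq> polyhedron K" and y: "y \<in> polyhedron K"
    and ny: "y \<notin> top_of_set (polyhedron K) interior_of A" and x: "x \<in> top_of_set (polyhedron K) interior_of A"
    and H: "\<forall>\<pi>y. simplicial_path K \<pi>y \<and> \<pi>y 0 = y \<longrightarrow>
              (\<exists>\<pi>x. simplicial_path K \<pi>x \<and> \<pi>x 0 = x \<and> (\<forall>t\<in>{0..1}. \<pi>x t \<in> A \<longleftrightarrow> \<pi>y t \<in> A))"
  shows False
proof -
  obtain \<sigma> where \<sigma>: "\<sigma> \<in> K" "y \<in> \<sigma>" "\<not> simplex_relint \<sigma> \<subseteq> A" using box_char[OF K A y] ny by blast
  then obtain b where b: "b \<in> simplex_relint \<sigma>" "b \<notin> A" by blast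
  have out: "\<forall>q\<in>simplex_relint \<sigma>. q \<notin> A" using A(1) \<sigma>(1) b unfolding sat_def by blast
  let ?l = "linepath y b"
  have l: "simplicial_path K ?l" "?l ` {0<..1} \<subseteq> simplex_relint \<sigma>" using simplicial_line(1,2)[OF K \<sigma>(1,2) b(1)] by auto
  obtain \<pi>x where \<pi>x: "simplicial_path K \<pi>x" "\<pi>x 0 = x" "\<forall>t\<in>{0..1}. \<pi>x t \<in> A \<longleftrightarrow> ?l t \<in> A"
    using H l by auto
  obtain T where T: "openin (top_of_set (polyhedron K)) T" "x \<in> T" "T \<subseteq> A"
    using x unfolding interior_of_def by blast
  obtain e where e: "e > 0" "\<forall>x'\<in>polyhedron K. dist x' x < e \<longrightarrow> x' \<in> T"
    using T(1,2) unfolding openin_euclidean_subtopology_iff by blast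
  have pin: "path_in (polyhedron K) \<pi>x" using \<pi>x(1) simplicial_path_in by blast
  hence "path \<pi>x" unfolding path_in_def by blast
  then obtain d where d: "d > 0" "\<forall>t\<in>{0..1}. dist t 0 < d \<longrightarrow> dist (\<pi>x t) (\<pi>x 0) < e"
    using path_near[of \<pi>x 0 e] e by auto
  define t where "t = min (d/2) 1"
  have t: "t \<in> {0<..1}" "dist t 0 < d" using d by (auto simp: t_def dist_real_def)
  have "\<pi>x t \<in> polyhedron K" using pin t unfolding path_in_def path_image_def by auto
  hence "\<pi>x t \<in> A" using e d t T \<pi>x(2) by auto
  moreover have "?l t \<notin> A" using l(2) t out by blast
  ultimately show False using \<pi>x(3) t by auto
qed

lemma gamma_helper:
  assumes K: "simplicial_complex K" and A: "sat K A" and x: "x \<in> gam K A B" and y: "y \<in> polyhedron K"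
    and H: "\<forall>\<pi>x. simplicial_path K \<pi>x \<and> \<pi>x 0 = x \<longrightarrow>
              (\<exists>\<pi>y. simplicial_path K \<pi>y \<and> \<pi>y 0 = y \<and> (\<forall>t\<in>{0..1}. (\<pi>x t \<in> A \<longleftrightarrow> \<pi>y t \<in> A) \<and> (\<pi>x t \<in> B \<longleftrightarrow> \<pi>y t \<in> B)))"
  shows "y \<in> gam K A B"
proof -
  obtain \<pi> where \<pi>: "path_in (polyhedron K) \<pi>" "\<pi> 0 = x" "\<pi> ` {0<..<1} \<subseteq> A" "\<pi> 1 \<in> B"
    using x unfolding gam_def by blast
  obtain \<pi>' where \<pi>': "simplicial_path K \<pi>'" "\<pi>' 0 = x" "\<pi>' 1 = \<pi> 1" "\<pi>' ` {0<..<1} \<subseteq> A"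
    using conversion[OF K A \<pi>(1,3)] \<pi>(2) by auto
  obtain \<pi>y where \<pi>y: "simplicial_path K \<pi>y" "\<pi>y 0 = y"
      "\<forall>t\<in>{0..1}. (\<pi>' t \<in> A \<longleftrightarrow> \<pi>y t \<in> A) \<and> (\<pi>' t \<in> B \<longleftrightarrow> \<pi>y t \<in> B)"
    using H \<pi>' by blast
  have "\<pi>y ` {0<..<1} \<subseteq> A"
  proof
    fix z assume "z \<in> \<pi>y ` {0<..<1}"
    then obtain t where t: "t \<in> {0<..<1}" "z = \<pi>y t" by blast
    have "\<pi>' t \<in> A" using \<pi>'(4) t(1) by blast
    thus "z \<in> A" using \<pi>y(3) t by auto
  qed
  moreover have "\<pi>y 1 \<in> B" using \<pi>y(3) \<pi>'(3) \<pi>(4) by auto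
  ultimately show ?thesis unfolding gam_def using y \<pi>y simplicial_path_in
    by (intro CollectI conjI exI[of _ \<pi>y]) auto
qed

lemma bisimD:
  assumes "simplicial_bisim K V R" "(x, y) \<in> R"
  shows "x \<in> polyhedron K" "y \<in> polyhedron K" "\<forall>p. x \<in> V p \<longleftrightarrow> y \<in> V p"
    "\<forall>\<pi>x. simplicial_path K \<pi>x \<and> \<pi>x 0 = x \<longrightarrow>
            (\<exists>\<pi>y. simplicial_path K \<pi>y \<and> \<pi>y 0 = y \<and> path_rel R \<pi>x \<pi>y)"
    "\<forall>\<pi>y. simplicial_path K \<pi>y \<and> \<pi>y 0 = y \<longrightarrow>
            (\<exists>\<pi>x. simplicial_path K \<pi>x \<and> \<pi>x 0 = x \<and> path_rel R \<pi>x \<pi>y)"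
  using assms unfolding simplicial_bisim_def by auto

lemma bisim_pres:
  assumes M: "polyhedral_model K V" and R: "simplicial_bisim K V R"
  shows "(x, y) \<in> R \<Longrightarrow> x \<in> sem K V \<phi> \<longleftrightarrow> y \<in> sem K V \<phi>"
proof (induction \<phi> arbitrary: x y)
  have K: "simplicial_complex K" using M unfolding polyhedral_model_def by blast
  {
    case FTop thus ?case using bisimD[OF R] by simp
  next
    case (FAtom a) thus ?case using bisimD[OF R] by simp
  next
    case (FNeg \<phi>) thus ?case using bisimD[OF R] by simp
  next
    case (FAnd \<phi> \<psi>) thus ?case by simp
  next
    case (FBox \<phi>)
    let ?A = "sem K V \<phi>"
    have A: "sat K ?A" "?A \<subseteq> polyhedron K" using sat_sem[OF M] sem_sub[of K V \<phi>] by auto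
    have xP: "x \<in> polyhedron K" and yP: "y \<in> polyhedron K" using bisimD(1,2)[OF R FBox(2)] by auto
    show ?case
    proof
      assume xi: "x \<in> sem K V (FBox \<phi>)"
      show "y \<in> sem K V (FBox \<phi>)"
      proof (rule ccontr)
        assume ny: "y \<notin> sem K V (FBox \<phi>)"
        have "\<forall>\<pi>y. simplicial_path K \<pi>y \<and> \<pi>y 0 = y \<longrightarrow>
              (\<exists>\<pi>x. simplicial_path K \<pi>x \<and> \<pi>x 0 = x \<and> (\<forall>t\<in>{0..1}. \<pi>x t \<in> ?A \<longleftrightarrow> \<pi>y t \<in> ?A))"
          using bisimD(5)[OF R FBox(2)] FBox(1) unfolding path_rel_def by metis
        thus False using box_helper[OF K A yP] ny xi by simp
      qed
    next
      assume yi: "y \<in> sem K V (FBox \<phi>)"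
      show "x \<in> sem K V (FBox \<phi>)"
      proof (rule ccontr)
        assume nx: "x \<notin> sem K V (FBox \<phi>)"
        have "\<forall>\<pi>x. simplicial_path K \<pi>x \<and> \<pi>x 0 = x \<longrightarrow>
              (\<exists>\<pi>y. simplicial_path K \<pi>y \<and> \<pi>y 0 = y \<and> (\<forall>t\<in>{0..1}. \<pi>y t \<in> ?A \<longleftrightarrow> \<pi>x t \<in> ?A))"
          using bisimD(4)[OF R FBox(2)] FBox(1) unfolding path_rel_def by metis
        thus False using box_helper[OF K A xP] nx yi by simp
      qed
    qed
  next
    case (FGamma \<phi> \<psi>)
    let ?A = "sem K V \<phi>" and ?B = "sem K V \<psi>"
    have A: "sat K ?A" using sat_sem[OF M] by auto
    have xP: "x \<in> polyhedron K" and yP: "y \<in> polyhedron K" using bisimD(1,2)[OF R FGamma(3)] by auto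
    have H1: "\<forall>\<pi>x. simplicial_path K \<pi>x \<and> \<pi>x 0 = x \<longrightarrow>
              (\<exists>\<pi>y. simplicial_path K \<pi>y \<and> \<pi>y 0 = y \<and> (\<forall>t\<in>{0..1}. (\<pi>x t \<in> ?A \<longleftrightarrow> \<pi>y t \<in> ?A) \<and> (\<pi>x t \<in> ?B \<longleftrightarrow> \<pi>y t \<in> ?B)))"
      using bisimD(4)[OF R FGamma(3)] FGamma(1,2) unfolding path_rel_def by metis
    have H2: "\<forall>\<pi>y. simplicial_path K \<pi>y \<and> \<pi>y 0 = y \<longrightarrow>
              (\<exists>\<pi>x. simplicial_path K \<pi>x \<and> \<pi>x 0 = x \<and> (\<forall>t\<in>{0..1}. (\<pi>y t \<in> ?A \<longleftrightarrow> \<pi>x t \<in> ?A) \<and> (\<pi>y t \<in> ?B \<longleftrightarrow> \<pi>x t \<in> ?B)))"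
      using bisimD(5)[OF R FGamma(3)] FGamma(1,2) unfolding path_rel_def by metis
    show ?case unfolding sem_gamma using gamma_helper[OF K A _ yP H1] gamma_helper[OF K A _ xP H2] by blast
  }
qed

lemma bisim_sub_logeq:
  assumes M: "polyhedral_model K V" and R: "simplicial_bisim K V R"
  shows "R \<subseteq> logeq K V"
proof
  fix z assume z: "z \<in> R"
  obtain x y where xy: "z = (x, y)" by (cases z)
  show "z \<in> logeq K V" unfolding logeq_def xy using bisimD(1,2)[OF R] bisim_pres[OF M R] z xy by auto
qed



lemma logeq_sym: "(x, y) \<in> logeq K V \<Longrightarrow> (y, x) \<in> logeq K V"
  unfolding logeq_def by auto
lemma logeq_trans: "(x, y) \<in> logeq K V \<Longrightarrow> (y, z) \<in> logeq K V \<Longrightarrow> (x, z) \<in> logeq K V"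
  unfolding logeq_def by auto
lemma logeq_refl: "x \<in> polyhedron K \<Longrightarrow> (x, x) \<in> logeq K V"
  unfolding logeq_def by auto
lemma logeq_P: "(x, y) \<in> logeq K V \<Longrightarrow> x \<in> polyhedron K \<and> y \<in> polyhedron K"
  unfolding logeq_def by auto

lemma same_cell:
  assumes M: "polyhedral_model K V" and \<sigma>: "\<sigma> \<in> K" and p: "p \<in> simplex_relint \<sigma>" and q: "q \<in> simplex_relint \<sigma>"
  shows "(p, q) \<in> logeq K V"
proof -
  have "\<forall>\<phi>. p \<in> sem K V \<phi> \<longleftrightarrow> q \<in> sem K V \<phi>"
    using sat_sem[OF M] \<sigma> p q unfolding sat_def by blast
  thus ?thesis unfolding logeq_def using p q relint_in_P[OF \<sigma>] by auto
qed

fun conj_list :: "'p fml list \<Rightarrow> 'p fml" where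
  "conj_list [] = FTop"
| "conj_list (\<phi> # xs) = FAnd \<phi> (conj_list xs)"

lemma sem_conj_list: "w \<in> sem K V (conj_list xs) \<longleftrightarrow> w \<in> polyhedron K \<and> (\<forall>\<phi>\<in>set xs. w \<in> sem K V \<phi>)"
  by (induction xs) (auto dest: sem_sub[THEN subsetD])

lemma separate:
  assumes M: "polyhedral_model K V" and C: "C \<in> cells K" and w0: "w0 \<in> C" "(w0, z) \<notin> logeq K V"
    and z: "z \<in> polyhedron K"
  shows "\<exists>\<phi>. z \<in> sem K V \<phi> \<and> (\<forall>w\<in>C. w \<notin> sem K V \<phi>)"
proof -
  obtain \<sigma> where \<sigma>: "\<sigma> \<in> K" "C = simplex_relint \<sigma>" using C unfolding cells_def by blast
  have w0P: "w0 \<in> polyhedron K" using w0 \<sigma> relint_in_P by blast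
  obtain \<phi> where \<phi>: "\<not> (w0 \<in> sem K V \<phi> \<longleftrightarrow> z \<in> sem K V \<phi>)" using w0 z w0P unfolding logeq_def by auto
  obtain \<phi>' where \<phi>': "z \<in> sem K V \<phi>'" "w0 \<notin> sem K V \<phi>'"
  proof (cases "z \<in> sem K V \<phi>")
    case True thus ?thesis using \<phi> that by blast
  next
    case False thus ?thesis using \<phi> that[of "FNeg \<phi>"] z by auto
  qed
  have "\<forall>w\<in>C. w \<notin> sem K V \<phi>'" using sat_sem[OF M, of \<phi>'] \<sigma> w0(1) \<phi>'(2) unfolding sat_def by blast
  thus ?thesis using \<phi>' by blast
qed

lemma char_formula:
  assumes M: "polyhedral_model K V" and z: "z \<in> polyhedron K"
  shows "\<exists>\<phi>. sem K V \<phi> = {w. (w, z) \<in> logeq K V}"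
proof -
  have K: "simplicial_complex K" using M unfolding polyhedral_model_def by blast
  have "finite K" using K unfolding simplicial_complex_def by blast
  hence "finite (cells K)" unfolding cells_def by (auto intro: finite_subset[of _ "simplex_relint ` K"])
  then obtain xs where xs: "set xs = cells K" using finite_list by blast
  define f where "f = (\<lambda>C. if \<exists>w\<in>C. (w, z) \<notin> logeq K V
      then SOME \<phi>. z \<in> sem K V \<phi> \<and> (\<forall>w\<in>C. w \<notin> sem K V \<phi>) else FTop)"
  have f1: "z \<in> sem K V (f C) \<and> (\<forall>w\<in>C. w \<notin> sem K V (f C))"
    if "C \<in> cells K" "\<exists>w\<in>C. (w, z) \<notin> logeq K V" for C
  proof -
    have "\<exists>\<phi>. z \<in> sem K V \<phi> \<and> (\<forall>w\<in>C. w \<notin> sem K V \<phi>)" using separate[OF M that(1) _ _ z] that(2) by blast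
    hence "z \<in> sem K V (SOME \<phi>. z \<in> sem K V \<phi> \<and> (\<forall>w\<in>C. w \<notin> sem K V \<phi>)) \<and> (\<forall>w\<in>C. w \<notin> sem K V (SOME \<phi>. z \<in> sem K V \<phi> \<and> (\<forall>w\<in>C. w \<notin> sem K V \<phi>)))"
      by (rule someI_ex)
    thus ?thesis using that(2) unfolding f_def by simp
  qed
  have "sem K V (conj_list (map f xs)) = {w. (w, z) \<in> logeq K V}"
  proof (rule set_eqI)
    fix w
    show "w \<in> sem K V (conj_list (map f xs)) \<longleftrightarrow> w \<in> {w. (w, z) \<in> logeq K V}"
    proof
      assume w: "w \<in> sem K V (conj_list (map f xs))"
      hence wP: "w \<in> polyhedron K" and all: "\<forall>C\<in>cells K. w \<in> sem K V (f C)"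
        unfolding sem_conj_list using xs by auto
      obtain \<sigma> where \<sigma>: "\<sigma> \<in> K" "w \<in> simplex_relint \<sigma>" using cover[OF K wP] by blast
      have C: "simplex_relint \<sigma> \<in> cells K" using \<sigma> relint_sub unfolding cells_def by blast
      show "w \<in> {w. (w, z) \<in> logeq K V}"
      proof (rule ccontr)
        assume "w \<notin> {w. (w, z) \<in> logeq K V}"
        hence "\<forall>w'\<in>simplex_relint \<sigma>. w' \<notin> sem K V (f (simplex_relint \<sigma>))" using f1[OF C] \<sigma>(2) by blast
        thus False using all C \<sigma>(2) by blast
      qed
    next
      assume w: "w \<in> {w. (w, z) \<in> logeq K V}"
      hence wP: "w \<in> polyhedron K" using logeq_P by blast
      have "\<forall>C\<in>cells K. w \<in> sem K V (f C)"
      proof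
        fix C assume C: "C \<in> cells K"
        show "w \<in> sem K V (f C)"
        proof (cases "\<exists>w\<in>C. (w, z) \<notin> logeq K V")
          case True
          hence "z \<in> sem K V (f C)" using f1[OF C] by blast
          thus ?thesis using w unfolding logeq_def by blast
        next
          case False thus ?thesis using wP unfolding f_def by simp
        qed
      qed
      thus "w \<in> sem K V (conj_list (map f xs))" unfolding sem_conj_list using xs wP by auto
    qed
  qed
  thus ?thesis by blast
qed



lemma one_piece:
  assumes M: "polyhedral_model K V" and xy: "(x, y) \<in> logeq K V" and \<rho>: "path_in (polyhedron K) \<rho>" "\<rho> 0 = x"
    and c: "c \<in> cells K" "\<rho> ` {0<..<1} \<subseteq> c"
  shows "\<exists>\<pi>'. simplicial_path K \<pi>' \<and> \<pi>' 0 = y \<and> (\<forall>t\<in>{0<..<1}. (\<rho> t, \<pi>' t) \<in> logeq K V)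
           \<and> (\<rho> 1, \<pi>' 1) \<in> logeq K V"
proof -
  have K: "simplicial_complex K" using M unfolding polyhedral_model_def by blast
  obtain \<sigma> where \<sigma>: "\<sigma> \<in> K" "c = simplex_relint \<sigma>" using c unfolding cells_def by blast
  have inP: "\<And>t. t \<in> {0..1} \<Longrightarrow> \<rho> t \<in> polyhedron K" using \<rho>(1) unfolding path_in_def path_image_def by auto
  define z1 where "z1 = \<rho> (1/2)"
  have z1c: "z1 \<in> c" using c(2) by (auto simp: z1_def)
  have z1P: "z1 \<in> polyhedron K" using inP by (simp add: z1_def)
  have z2P: "\<rho> 1 \<in> polyhedron K" using inP by simp
  obtain \<chi>1 where \<chi>1: "sem K V \<chi>1 = {w. (w, z1) \<in> logeq K V}" using char_formula[OF M z1P] by blast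
  obtain \<chi>2 where \<chi>2: "sem K V \<chi>2 = {w. (w, \<rho> 1) \<in> logeq K V}" using char_formula[OF M z2P] by blast
  have eqc: "(\<rho> t, z1) \<in> logeq K V" if "t \<in> {0<..<1}" for t
    using same_cell[OF M \<sigma>(1), of "\<rho> t" z1] c(2) that z1c \<sigma>(2) by blast
  have "\<rho> ` {0<..<1} \<subseteq> sem K V \<chi>1" using eqc \<chi>1 by auto
  moreover have "\<rho> 1 \<in> sem K V \<chi>2" using \<chi>2 logeq_refl[OF z2P] by simp
  moreover have "x \<in> polyhedron K" using xy logeq_P by blast
  ultimately have "x \<in> sem K V (FGamma \<chi>1 \<chi>2)" using \<rho> by auto
  hence "y \<in> sem K V (FGamma \<chi>1 \<chi>2)" using xy unfolding logeq_def by blast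
  then obtain \<pi> where \<pi>: "path_in (polyhedron K) \<pi>" "\<pi> 0 = y" "\<pi> ` {0<..<1} \<subseteq> sem K V \<chi>1" "\<pi> 1 \<in> sem K V \<chi>2"
    by auto
  obtain \<pi>' where \<pi>': "simplicial_path K \<pi>'" "\<pi>' 0 = y" "\<pi>' 1 = \<pi> 1" "\<pi>' ` {0<..<1} \<subseteq> sem K V \<chi>1"
    using conversion[OF K sat_sem[OF M] \<pi>(1,3)] \<pi>(2) by auto
  have "\<forall>t\<in>{0<..<1}. (\<rho> t, \<pi>' t) \<in> logeq K V"
  proof
    fix t :: real assume t: "t \<in> {0<..<1}"
    have "(\<pi>' t, z1) \<in> logeq K V" using \<pi>'(4) t \<chi>1 by blast
    thus "(\<rho> t, \<pi>' t) \<in> logeq K V" using eqc[OF t] logeq_sym logeq_trans by metis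
  qed
  moreover have "(\<rho> 1, \<pi>' 1) \<in> logeq K V" using \<pi>(4) \<pi>'(3) \<chi>2 logeq_sym by auto
  ultimately show ?thesis using \<pi>' by blast
qed

lemma pieces_suffix:
  assumes p: "pieces K \<pi> (Suc k) s c" and k: "k \<ge> 1"
  shows "pieces K (subpath (s 1) 1 \<pi>) k (\<lambda>i. (s (Suc i) - s 1) / (1 - s 1)) (\<lambda>i. c (Suc i))"
proof -
  have p1: "s 0 = 0" "s (Suc k) = 1" "\<forall>i<Suc k. s i < s (Suc i)"
    "\<forall>i\<in>{1..Suc k}. c i \<in> cells K \<and> \<pi> ` {s (i - 1)<..<s i} \<subseteq> c i" using p unfolding pieces_def by auto
  have s1: "s 1 < 1" using strict_mono_steps[OF p1(3), of 1 "Suc k"] k p1(2) by simp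
  have strict: "\<forall>i<k. (s (Suc i) - s 1) / (1 - s 1) < (s (Suc (Suc i)) - s 1) / (1 - s 1)"
    using p1(3) s1 by (auto simp: divide_strict_right_mono)
  have im: "\<forall>i\<in>{1..k}. c (Suc i) \<in> cells K \<and> subpath (s 1) 1 \<pi> ` {(s (Suc (i - 1)) - s 1) / (1 - s 1)<..<(s (Suc i) - s 1) / (1 - s 1)} \<subseteq> c (Suc i)"
  proof
    fix i assume i: "i \<in> {1..k}"
    have ci: "c (Suc i) \<in> cells K \<and> \<pi> ` {s i<..<s (Suc i)} \<subseteq> c (Suc i)" using p1(4)[rule_format, of "Suc i"] i by simp
    have "subpath (s 1) 1 \<pi> ` {(s (Suc (i - 1)) - s 1) / (1 - s 1)<..<(s (Suc i) - s 1) / (1 - s 1)} \<subseteq> c (Suc i)"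
    proof
      fix x assume "x \<in> subpath (s 1) 1 \<pi> ` {(s (Suc (i - 1)) - s 1) / (1 - s 1)<..<(s (Suc i) - s 1) / (1 - s 1)}"
      then obtain t where t: "(s i - s 1) / (1 - s 1) < t" "t < (s (Suc i) - s 1) / (1 - s 1)"
        "x = \<pi> ((1 - s 1) * t + s 1)" using i by (auto simp: subpath_def)
      have "(1 - s 1) * t + s 1 \<in> {s i<..<s (Suc i)}" using t(1,2) s1 by (auto simp: field_simps)
      thus "x \<in> c (Suc i)" using ci t(3) by blast
    qed
    thus "c (Suc i) \<in> cells K \<and> subpath (s 1) 1 \<pi> ` {(s (Suc (i - 1)) - s 1) / (1 - s 1)<..<(s (Suc i) - s 1) / (1 - s 1)} \<subseteq> c (Suc i)"
      using ci by blast
  qed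
  show ?thesis unfolding pieces_def using k strict im s1 p1(2)
    by (auto simp del: subpath_def)
qed

lemma matching:
  assumes M: "polyhedral_model K V"
  shows "\<forall>\<pi> x y s c. pieces K \<pi> k s c \<longrightarrow> path_in (polyhedron K) \<pi> \<longrightarrow> \<pi> 0 = x \<longrightarrow> (x, y) \<in> logeq K V \<longrightarrow>
          (\<exists>\<pi>'. simplicial_path K \<pi>' \<and> \<pi>' 0 = y \<and> (\<forall>t\<in>{0..1}. (\<pi> t, \<pi>' t) \<in> logeq K V))"
proof (induction k)
  case 0 thus ?case unfolding pieces_def by simp
next
  case (Suc k)
  show ?case
  proof (intro allI impI)
    fix \<pi> x y s c assume p: "pieces K \<pi> (Suc k) s c" and pin: "path_in (polyhedron K) \<pi>"
      and x: "\<pi> 0 = x" and xy: "(x, y) \<in> logeq K V"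
    have p1: "s 0 = 0" "s (Suc k) = 1" "\<forall>i<Suc k. s i < s (Suc i)"
      "\<forall>i\<in>{1..Suc k}. c i \<in> cells K \<and> \<pi> ` {s (i - 1)<..<s i} \<subseteq> c i" using p unfolding pieces_def by auto
    have pth: "path \<pi>" using pin unfolding path_in_def by blast
    show "\<exists>\<pi>'. simplicial_path K \<pi>' \<and> \<pi>' 0 = y \<and> (\<forall>t\<in>{0..1}. (\<pi> t, \<pi>' t) \<in> logeq K V)"
    proof (cases "k = 0")
      case True
      have c1: "c 1 \<in> cells K" "\<pi> ` {0<..<1} \<subseteq> c 1" using p1 True by auto
      obtain \<pi>' where \<pi>': "simplicial_path K \<pi>'" "\<pi>' 0 = y" "\<forall>t\<in>{0<..<1}. (\<pi> t, \<pi>' t) \<in> logeq K V"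
        "(\<pi> 1, \<pi>' 1) \<in> logeq K V" using one_piece[OF M xy pin x c1] by blast
      have "\<forall>t\<in>{0..1}. (\<pi> t, \<pi>' t) \<in> logeq K V"
      proof
        fix t :: real assume t: "t \<in> {0..1}"
        show "(\<pi> t, \<pi>' t) \<in> logeq K V"
        proof (cases "t = 0")
          case True thus ?thesis using xy x \<pi>'(2) by simp
        next
          case False
          thus ?thesis using \<pi>'(3,4) t by (cases "t = 1") auto
        qed
      qed
      thus ?thesis using \<pi>' by blast
    next
      case False
      hence k: "k \<ge> 1" by simp
      define s1 where "s1 = s 1"
      have s1: "0 < s1" "s1 < 1" using p1(3) p1(1) strict_mono_steps[OF p1(3), of 1 "Suc k"] k p1(2)
        by (auto simp: s1_def)
      let ?\<rho> = "subpath 0 s1 \<pi>" and ?\<sigma> = "subpath s1 1 \<pi>"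
      have "path ?\<rho>" using path_subpath[OF pth, of 0 s1] s1 by simp
      hence \<rho>: "path_in (polyhedron K) ?\<rho>" "?\<rho> 0 = x"
        using pin path_image_subpath_subset[of 0 s1 \<pi>] s1 x unfolding path_in_def
        by (auto, simp add: subpath_def)
      have c1: "c 1 \<in> cells K" "?\<rho> ` {0<..<1} \<subseteq> c 1"
      proof -
        show "c 1 \<in> cells K" using p1(4) by auto
        show "?\<rho> ` {0<..<1} \<subseteq> c 1"
        proof
          fix z assume "z \<in> ?\<rho> ` {0<..<1}"
          then obtain t where t: "0 < t" "t < 1" "z = \<pi> (s1 * t)" by (auto simp: subpath_def)
          have "s1 * t \<in> {s 0<..<s 1}" using t s1 p1(1) by (auto simp: s1_def mult_less_cancel_left1)
          moreover have "\<pi> ` {s 0<..<s 1} \<subseteq> c 1" using p1(4)[rule_format, of 1] by simp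
          ultimately show "z \<in> c 1" using t(3) by blast
        qed
      qed
      obtain \<pi>1 where \<pi>1: "simplicial_path K \<pi>1" "\<pi>1 0 = y" "\<forall>t\<in>{0<..<1}. (?\<rho> t, \<pi>1 t) \<in> logeq K V"
        "(?\<rho> 1, \<pi>1 1) \<in> logeq K V" using one_piece[OF M xy \<rho> c1] by blast
      have ps: "pieces K ?\<sigma> k (\<lambda>i. (s (Suc i) - s 1) / (1 - s 1)) (\<lambda>i. c (Suc i))"
        using pieces_suffix[OF p k] by (simp add: s1_def)
      have "path ?\<sigma>" using path_subpath[OF pth, of s1 1] s1 by simp
      hence \<sigma>: "path_in (polyhedron K) ?\<sigma>" "?\<sigma> 0 = \<pi> s1"
        using pin path_image_subpath_subset[of s1 1 \<pi>] s1 unfolding path_in_def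
        by (auto, simp add: subpath_def)
      have e1: "(\<pi> s1, \<pi>1 1) \<in> logeq K V" using \<pi>1(4) by (simp add: subpath_def)
      obtain \<pi>2 where \<pi>2: "simplicial_path K \<pi>2" "\<pi>2 0 = \<pi>1 1" "\<forall>t\<in>{0..1}. (?\<sigma> t, \<pi>2 t) \<in> logeq K V"
        using Suc.IH ps \<sigma> e1 by blast
      define \<pi>' where "\<pi>' = join_at s1 \<pi>1 \<pi>2"
      have sp: "simplicial_path K \<pi>'" unfolding \<pi>'_def using simplicial_join[OF \<pi>1(1) \<pi>2(1) \<pi>2(2)[symmetric] s1] .
      have st: "\<pi>' 0 = y" unfolding \<pi>'_def using join_at_0[of s1 \<pi>1 \<pi>2] s1 \<pi>1(2) by simp
      have "\<forall>t\<in>{0..1}. (\<pi> t, \<pi>' t) \<in> logeq K V"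
      proof
        fix t :: real assume t: "t \<in> {0..1}"
        show "(\<pi> t, \<pi>' t) \<in> logeq K V"
        proof (cases "t < s1")
          case True
          show ?thesis
          proof (cases "t = 0")
            case True thus ?thesis using st xy x by simp
          next
            case False
            hence u: "t / s1 \<in> {0<..<1}" using t \<open>t < s1\<close> s1 by (auto simp: field_simps)
            have "(?\<rho> (t / s1), \<pi>1 (t / s1)) \<in> logeq K V" using \<pi>1(3) u by blast
            moreover have "?\<rho> (t / s1) = \<pi> t" using s1 by (simp add: subpath_def)
            moreover have "\<pi>' t = \<pi>1 (t / s1)" using \<open>t < s1\<close> by (simp add: \<pi>'_def join_at_def)
            ultimately show ?thesis by simp
          qed
        next
          case False
          show ?thesis
          proof (cases "t = s1")
            case True thus ?thesis using e1 s1 by (simp add: \<pi>'_def join_at_def)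
          next
            case False
            hence ts: "s1 < t" using \<open>\<not> t < s1\<close> by simp
            define u where "u = (t - s1) / (1 - s1)"
            have u: "u \<in> {0..1}" using t ts s1 by (auto simp: u_def field_simps)
            have "(?\<sigma> u, \<pi>2 u) \<in> logeq K V" using \<pi>2(3) u by blast
            moreover have "?\<sigma> u = \<pi> t" using s1 by (simp add: subpath_def u_def)
            moreover have "\<pi>' t = \<pi>2 u" using ts by (simp add: \<pi>'_def join_at_def u_def)
            ultimately show ?thesis by simp
          qed
        qed
      qed
      thus ?thesis using sp st by blast
    qed
  qed
qed

lemma logeq_bisim:
  assumes M: "polyhedral_model K V"
  shows "simplicial_bisim K V (logeq K V)"
  unfolding simplicial_bisim_def
proof (intro conjI ballI)
  show "logeq K V \<subseteq> polyhedron K \<times> polyhedron K" using logeq_P by auto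
next
  fix z assume z: "z \<in> logeq K V"
  obtain x y where xy: "z = (x, y)" by (cases z)
  have E: "(x, y) \<in> logeq K V" using z xy by simp
  have A: "\<forall>p. x \<in> V p \<longleftrightarrow> y \<in> V p"
  proof
    fix p
    have "x \<in> sem K V (FAtom p) \<longleftrightarrow> y \<in> sem K V (FAtom p)" using E unfolding logeq_def by blast
    thus "x \<in> V p \<longleftrightarrow> y \<in> V p" using logeq_P[OF E] by simp
  qed
  have B: "\<forall>\<pi>x. simplicial_path K \<pi>x \<and> \<pi>x 0 = x \<longrightarrow>
            (\<exists>\<pi>y. simplicial_path K \<pi>y \<and> \<pi>y 0 = y \<and> path_rel (logeq K V) \<pi>x \<pi>y)"
  proof (intro allI impI)
    fix \<pi>x assume h: "simplicial_path K \<pi>x \<and> \<pi>x 0 = x"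
    then obtain k s c where "pieces K \<pi>x k s c" "path_in (polyhedron K) \<pi>x" using simplicial_path_pieces by blast
    thus "\<exists>\<pi>y. simplicial_path K \<pi>y \<and> \<pi>y 0 = y \<and> path_rel (logeq K V) \<pi>x \<pi>y"
      using matching[OF M, of k] h E unfolding path_rel_def by blast
  qed
  have C: "\<forall>\<pi>y. simplicial_path K \<pi>y \<and> \<pi>y 0 = y \<longrightarrow>
            (\<exists>\<pi>x. simplicial_path K \<pi>x \<and> \<pi>x 0 = x \<and> path_rel (logeq K V) \<pi>x \<pi>y)"
  proof (intro allI impI)
    fix \<pi>y assume h: "simplicial_path K \<pi>y \<and> \<pi>y 0 = y"
    then obtain k s c where "pieces K \<pi>y k s c" "path_in (polyhedron K) \<pi>y" using simplicial_path_pieces by blast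
    then obtain \<pi>' where "simplicial_path K \<pi>'" "\<pi>' 0 = x" "\<forall>t\<in>{0..1}. (\<pi>y t, \<pi>' t) \<in> logeq K V"
      using matching[OF M, of k] h logeq_sym[OF E] by blast
    thus "\<exists>\<pi>x. simplicial_path K \<pi>x \<and> \<pi>x 0 = x \<and> path_rel (logeq K V) \<pi>x \<pi>y"
      unfolding path_rel_def using logeq_sym by blast
  qed
  show "case z of (x, y) \<Rightarrow> (\<forall>p. x \<in> V p \<longleftrightarrow> y \<in> V p) \<and>
      (\<forall>\<pi>x. simplicial_path K \<pi>x \<and> \<pi>x 0 = x \<longrightarrow> (\<exists>\<pi>y. simplicial_path K \<pi>y \<and> \<pi>y 0 = y \<and> path_rel (logeq K V) \<pi>x \<pi>y)) \<and>
      (\<forall>\<pi>y. simplicial_path K \<pi>y \<and> \<pi>y 0 = y \<longrightarrow> (\<exists>\<pi>x. simplicial_path K \<pi>x \<and> \<pi>x 0 = x \<and> path_rel (logeq K V) \<pi>x \<pi>y))"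
    using A B C xy by simp
qed

theorem mainTheorem15:
  fixes K :: "'a::euclidean_space set set" and V :: "'p::finite \<Rightarrow> 'a set"
  assumes "polyhedral_model K V"
  shows "\<exists>R. simplicial_bisim K V R \<and> (\<forall>R'. simplicial_bisim K V R' \<longrightarrow> R' \<subseteq> R)
           \<and> R = logeq K V"
  using logeq_bisim[OF assms] bisim_sub_logeq[OF assms] by blast

end
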